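(* Let $|\psi\rangle,|\phi\rangle$ be pure states in a finite-dimensional Hilbert space $\mathcal H$. For every $\alpha\in(0,1)\cup(1,2)$ and every $\beta\in(-\infty,0)\cup(0,+\infty)$, $$J_{\alpha,\beta}\big(|\psi\rangle\langle\psi|,|\phi\rangle\langle\phi|\big)=J'_{2-\alpha,\beta}\big(|\psi\rangle\langle\psi|,|\phi\rangle\langle\phi|\big).$$
   Context: For a density operator $\rho$, $\alpha\in(0,1)\cup(1,\infty)$, $\beta\in(-\infty,0)\cup(0,\infty)$, the quantum $(\alpha,\beta)$ entropy is $S_{\alpha,\beta}(\rho)=\frac{1}{(1-\alpha)\beta}\big[(\mathrm{Tr}\,\rho^{\alpha})^{\beta}-1\big]$ and the quantum $(\alpha,\beta)$-relative entropy is $D_{\alpha,\beta}(\rho\|\sigma)=\frac{1}{(1-\alpha)\beta}\big[1-(\mathrm{Tr}(\rho^{\alpha}\sigma^{1-\alpha}))^{\beta}\big]$, where any negative power of a density operator is taken only on its support (zero eigenvalues are kept as zero). The two quantum $(\alpha,\beta)$ Jensen–Shannon divergences are $J_{\alpha,\beta}(\rho,\sigma)=S_{\alpha,\beta}\big(\tfrac{\rho+\sigma}{2}\big)-\tfrac12 S_{\alpha,\beta}(\rho)-\tfrac12 S_{\alpha,\beta}(\sigma)$ and $J'_{\alpha,\beta}(\rho,\sigma)=\tfrac12\big[D_{\alpha,\beta}\big(\rho\|\tfrac{\rho+\sigma}{2}\big)+D_{\alpha,\beta}\big(\sigma\|\tfrac{\rho+\sigma}{2}\big)\big]$. *)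

theory Defs
  imports "Jordan_Normal_Form.Schur_Decomposition"
begin

text \<open>Finite-dimensional Hilbert space = complex column vectors of length n;
  operators = complex n x n matrices (Jordan_Normal_Form).\<close>

definition mtrace :: "complex mat \<Rightarrow> complex" where
  "mtrace A = (\<Sum>i<dim_row A. A $$ (i,i))"

definition unitary_mat :: "nat \<Rightarrow> complex mat \<Rightarrow> bool" where
  "unitary_mat n U \<longleftrightarrow> U \<in> carrier_mat n n \<and>
     U * mat_adjoint U = 1\<^sub>m n \<and> mat_adjoint U * U = 1\<^sub>m n"

definition psd_mat :: "complex mat \<Rightarrow> bool" where
  "psd_mat A \<longleftrightarrow> (\<exists>n U d. A \<in> carrier_mat n n \<and> unitary_mat n U \<and> (\<forall>i<n. d i \<ge> 0) \<and>
      A = U * mat_diag n (\<lambda>i. complex_of_real (d i)) * mat_adjoint U)"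

definition density_op :: "complex mat \<Rightarrow> bool" where
  "density_op A \<longleftrightarrow> psd_mat A \<and> mtrace A = 1"

text \<open>Zero eigenvalues are mapped to zero (Isabelle's convention 0 powr a = 0), so negative
  powers are taken on the support only.\<close>
definition mat_powr :: "complex mat \<Rightarrow> real \<Rightarrow> complex mat" where
  "mat_powr A a = (SOME B. \<exists>n U d. A \<in> carrier_mat n n \<and> unitary_mat n U \<and> (\<forall>i<n. d i \<ge> 0) \<and>
      A = U * mat_diag n (\<lambda>i. complex_of_real (d i)) * mat_adjoint U \<and>
      B = U * mat_diag n (\<lambda>i. complex_of_real (d i powr a)) * mat_adjoint U)"

definition ket_bra :: "complex vec \<Rightarrow> complex mat" where
  "ket_bra v = Matrix.mat (dim_vec v) (dim_vec v) (\<lambda>(i,j). v $ i * cnj (v $ j))"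

definition normalized_vec :: "complex vec \<Rightarrow> bool" where
  "normalized_vec v \<longleftrightarrow> (\<Sum>i<dim_vec v. cmod (v $ i) ^ 2) = 1"

definition ab_entropy :: "real \<Rightarrow> real \<Rightarrow> complex mat \<Rightarrow> real" where
  "ab_entropy a b \<rho> = 1 / ((1 - a) * b) * ((Re (mtrace (mat_powr \<rho> a))) powr b - 1)"

definition ab_rel_entropy :: "real \<Rightarrow> real \<Rightarrow> complex mat \<Rightarrow> complex mat \<Rightarrow> real" where
  "ab_rel_entropy a b \<rho> \<sigma> =
     1 / ((1 - a) * b) * (1 - (Re (mtrace (mat_powr \<rho> a * mat_powr \<sigma> (1 - a)))) powr b)"

definition mixture :: "complex mat \<Rightarrow> complex mat \<Rightarrow> complex mat" where
  "mixture \<rho> \<sigma> = (1/2 :: complex) \<cdot>\<^sub>m (\<rho> + \<sigma>)"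

definition JS_ab :: "real \<Rightarrow> real \<Rightarrow> complex mat \<Rightarrow> complex mat \<Rightarrow> real" where
  "JS_ab a b \<rho> \<sigma> = ab_entropy a b (mixture \<rho> \<sigma>) - ab_entropy a b \<rho> / 2 - ab_entropy a b \<sigma> / 2"

definition JS'_ab :: "real \<Rightarrow> real \<Rightarrow> complex mat \<Rightarrow> complex mat \<Rightarrow> real" where
  "JS'_ab a b \<rho> \<sigma> = (ab_rel_entropy a b \<rho> (mixture \<rho> \<sigma>) + ab_rel_entropy a b \<sigma> (mixture \<rho> \<sigma>)) / 2"

end

theory Submission
  imports Defs
begin
lemma adj_dims[simp]: "dim_row (mat_adjoint A) = dim_col A" "dim_col (mat_adjoint A) = dim_row A"
  unfolding mat_adjoint_def by (auto simp: mat_of_rows_def)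

lemma adj_idx[simp]: "i < dim_col A \<Longrightarrow> j < dim_row A \<Longrightarrow> mat_adjoint A $$ (i,j) = cnj (A $$ (j,i))"
  unfolding mat_adjoint_def by (simp add: mat_of_rows_def)

lemma adj_carrier[simp]: "A \<in> carrier_mat n m \<Longrightarrow> mat_adjoint A \<in> carrier_mat m n"
  unfolding carrier_mat_def by simp

lemma mult_idx: "A \<in> carrier_mat n m \<Longrightarrow> B \<in> carrier_mat m k \<Longrightarrow> i < n \<Longrightarrow> j < k \<Longrightarrow>
  (A * B) $$ (i,j) = (\<Sum>l<m. A $$ (i,l) * B $$ (l,j))"
  by (simp add: scalar_prod_def atLeast0LessThan)

lemma mtrace_sum: "A \<in> carrier_mat n n \<Longrightarrow> mtrace A = (\<Sum>i<n. A $$ (i,i))"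
  unfolding mtrace_def by simp

lemma mtrace_comm: assumes "A \<in> carrier_mat n m" "B \<in> carrier_mat m n"
  shows "mtrace (A * B) = mtrace (B * A)"
proof -
  have "mtrace (A * B) = (\<Sum>i<n. \<Sum>l<m. A $$ (i,l) * B $$ (l,i))"
    using assms by (simp add: mtrace_sum[of _ n] mult_idx[OF assms] del: index_mult_mat)
  also have "\<dots> = (\<Sum>l<m. \<Sum>i<n. B $$ (l,i) * A $$ (i,l))"
    by (subst sum.swap) (simp add: mult.commute)
  also have "\<dots> = mtrace (B * A)"
    using assms by (simp add: mtrace_sum[of _ m] mult_idx[OF assms(2,1)] del: index_mult_mat)
  finally show ?thesis .
qed

lemma unitary_carrier: "unitary_mat n U \<Longrightarrow> U \<in> carrier_mat n n"
  unfolding unitary_mat_def by simp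

lemma unitary_trace: assumes U: "unitary_mat n U" and X: "X \<in> carrier_mat n n"
  shows "mtrace (U * X * mat_adjoint U) = mtrace X"
proof -
  have Uc: "U \<in> carrier_mat n n" using U unitary_carrier by auto
  have "mtrace (U * X * mat_adjoint U) = mtrace (mat_adjoint U * (U * X))"
    by (rule mtrace_comm[of _ n n]) (use Uc X in auto)
  also have "mat_adjoint U * (U * X) = (mat_adjoint U * U) * X"
    using Uc X by (simp add: assoc_mult_mat[of _ n n _ n _ n])
  also have "\<dots> = X" using U X unfolding unitary_mat_def by simp
  finally show ?thesis .
qed

lemma ket_bra_carrier[simp]: "v \<in> carrier_vec n \<Longrightarrow> ket_bra v \<in> carrier_mat n n"
  unfolding ket_bra_def by simp

lemma ket_bra_dims[simp]: "dim_row (ket_bra v) = dim_vec v" "dim_col (ket_bra v) = dim_vec v"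
  unfolding ket_bra_def by auto

lemma ket_bra_idx: "v \<in> carrier_vec n \<Longrightarrow> i < n \<Longrightarrow> j < n \<Longrightarrow> ket_bra v $$ (i,j) = v $ i * cnj (v $ j)"
  unfolding ket_bra_def by simp

lemma K1: assumes U: "U \<in> carrier_mat n n" and v: "v \<in> carrier_vec n"
  shows "mat_adjoint U * ket_bra v * U = ket_bra (mat_adjoint U *\<^sub>v v)"
proof (rule eq_matI)
  let ?a = "mat_adjoint U *\<^sub>v v"
  have a: "?a \<in> carrier_vec n" by (rule mult_mat_vec_carrier[OF adj_carrier[OF U] v])
  have ai: "?a $ i = (\<Sum>m<n. cnj (U $$ (m,i)) * v $ m)" if "i < n" for i
    using U v that by (simp add: scalar_prod_def atLeast0LessThan)
  fix i j assume i: "i < dim_row (ket_bra ?a)" and j: "j < dim_col (ket_bra ?a)"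
  moreover have "dim_vec ?a = n" using a by (rule carrier_vecD)
  ultimately have i: "i < n" and j: "j < n" by simp_all
  have "(mat_adjoint U * ket_bra v * U) $$ (i,j) = (\<Sum>l<n. (\<Sum>m<n. cnj (U $$ (m,i)) * (v $ m * cnj (v $ l))) * U $$ (l,j))"
  proof -
    have c1: "mat_adjoint U * ket_bra v \<in> carrier_mat n n"
      by (rule mult_carrier_mat[OF adj_carrier[OF U] ket_bra_carrier[OF v]])
    have "(mat_adjoint U * ket_bra v * U) $$ (i,j) = (\<Sum>l<n. (mat_adjoint U * ket_bra v) $$ (i,l) * U $$ (l,j))"
      by (rule mult_idx[OF c1 U i j])
    also have "\<dots> = (\<Sum>l<n. (\<Sum>m<n. cnj (U $$ (m,i)) * (v $ m * cnj (v $ l))) * U $$ (l,j))"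
      by (rule sum.cong[OF refl]) (use U v i in \<open>simp add: mult_idx[OF adj_carrier[OF U] ket_bra_carrier[OF v]] ket_bra_idx del: index_mult_mat\<close>)
    finally show ?thesis .
  qed
  also have "\<dots> = (\<Sum>m<n. cnj (U $$ (m,i)) * v $ m) * (\<Sum>l<n. U $$ (l,j) * cnj (v $ l))"
  proof -
    have "(\<Sum>l<n. (\<Sum>m<n. cnj (U $$ (m,i)) * (v $ m * cnj (v $ l))) * U $$ (l,j))
       = (\<Sum>l<n. \<Sum>m<n. (cnj (U $$ (m,i)) * v $ m) * (U $$ (l,j) * cnj (v $ l)))"
      by (simp add: sum_distrib_left sum_distrib_right mult_ac)
    also have "\<dots> = (\<Sum>m<n. \<Sum>l<n. (cnj (U $$ (m,i)) * v $ m) * (U $$ (l,j) * cnj (v $ l)))"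
      by (rule sum.swap)
    also have "\<dots> = (\<Sum>m<n. cnj (U $$ (m,i)) * v $ m) * (\<Sum>l<n. U $$ (l,j) * cnj (v $ l))"
      by (simp add: sum_product)
    finally show ?thesis .
  qed
  also have "\<dots> = ket_bra ?a $$ (i,j)"
    using a i j by (simp add: ket_bra_idx ai mult.commute)
  finally show "(mat_adjoint U * ket_bra v * U) $$ (i,j) = ket_bra ?a $$ (i,j)" .
qed (use U v in auto)

lemma mtrace_ket_bra: "v \<in> carrier_vec n \<Longrightarrow> mtrace (ket_bra v) = complex_of_real (\<Sum>i<n. cmod (v $ i) ^ 2)"
  by (simp add: mtrace_sum[of _ n] ket_bra_idx flip: complex_norm_square)

lemma norm_pres: assumes U: "unitary_mat n U" and v: "v \<in> carrier_vec n"
  shows "(\<Sum>i<n. cmod ((mat_adjoint U *\<^sub>v v) $ i) ^ 2) = (\<Sum>i<n. cmod (v $ i) ^ 2)"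
proof -
  have Uc: "U \<in> carrier_mat n n" using U unitary_carrier by auto
  have a: "mat_adjoint U *\<^sub>v v \<in> carrier_vec n" by (rule mult_mat_vec_carrier[OF adj_carrier[OF Uc] v])
  have "complex_of_real (\<Sum>i<n. cmod ((mat_adjoint U *\<^sub>v v) $ i) ^ 2) = mtrace (mat_adjoint U * ket_bra v * U)"
    using K1[OF Uc v] mtrace_ket_bra[OF a] by simp
  also have "\<dots> = mtrace (U * (mat_adjoint U * ket_bra v))"
    by (rule mtrace_comm[of _ n n]) (use Uc v mult_carrier_mat[OF adj_carrier[OF Uc] ket_bra_carrier[OF v]] in auto)
  also have "U * (mat_adjoint U * ket_bra v) = (U * mat_adjoint U) * ket_bra v"
    using Uc v by (simp add: assoc_mult_mat[of _ n n _ n _ n])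
  also have "\<dots> = ket_bra v" using U v unfolding unitary_mat_def by simp
  finally have "complex_of_real (\<Sum>i<n. cmod ((mat_adjoint U *\<^sub>v v) $ i) ^ 2) = complex_of_real (\<Sum>i<n. cmod (v $ i) ^ 2)"
    using mtrace_ket_bra[OF v] by simp
  thus ?thesis by (simp only: of_real_eq_iff)
qed

lemma diag_idx: "i < n \<Longrightarrow> j < n \<Longrightarrow> mat_diag n f $$ (i,j) = (if i = j then f j else 0)"
  unfolding mat_diag_def by simp

lemma spec_unique:
  assumes U: "unitary_mat n U" and V: "unitary_mat n V"
    and eq: "U * mat_diag n (\<lambda>i. complex_of_real (d i)) * mat_adjoint U
           = V * mat_diag n (\<lambda>i. complex_of_real (e i)) * mat_adjoint V"
  shows "U * mat_diag n (\<lambda>i. complex_of_real (f (d i))) * mat_adjoint U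
       = V * mat_diag n (\<lambda>i. complex_of_real (f (e i))) * mat_adjoint V"
proof -
  have Uc: "U \<in> carrier_mat n n" and Vc: "V \<in> carrier_mat n n" using U V unitary_carrier by auto
  have dims: "dim_row U = n" "dim_col U = n" "dim_row V = n" "dim_col V = n" using Uc Vc by auto
  have UU: "mat_adjoint U * U = 1\<^sub>m n" "U * mat_adjoint U = 1\<^sub>m n" using U unfolding unitary_mat_def by auto
  have VV: "mat_adjoint V * V = 1\<^sub>m n" "V * mat_adjoint V = 1\<^sub>m n" using V unfolding unitary_mat_def by auto
  define Dd where "Dd = mat_diag n (\<lambda>i. complex_of_real (d i))"
  define De where "De = mat_diag n (\<lambda>i. complex_of_real (e i))"
  define Fd where "Fd = mat_diag n (\<lambda>i. complex_of_real (f (d i)))"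
  define Fe where "Fe = mat_diag n (\<lambda>i. complex_of_real (f (e i)))"
  define W where "W = mat_adjoint V * U"
  have cs: "Dd \<in> carrier_mat n n" "De \<in> carrier_mat n n" "Fd \<in> carrier_mat n n" "Fe \<in> carrier_mat n n"
    "W \<in> carrier_mat n n" "mat_adjoint U \<in> carrier_mat n n" "mat_adjoint V \<in> carrier_mat n n"
    unfolding Dd_def De_def Fd_def Fe_def W_def using Uc Vc by auto
  have eq': "U * Dd * mat_adjoint U = V * De * mat_adjoint V" using eq unfolding Dd_def De_def .
  have "W * Dd = mat_adjoint V * (U * Dd * mat_adjoint U) * U"
  proof -
    have "mat_adjoint V * (U * Dd * mat_adjoint U) * U = mat_adjoint V * U * Dd * (mat_adjoint U * U)"
      using Uc Vc cs by (simp add: assoc_mult_mat[of _ n n _ n _ n] mult_carrier_mat[of _ n n _ n])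
    also have "\<dots> = W * Dd" using UU cs unfolding W_def by (simp add: right_mult_one_mat[of _ n n])
    finally show ?thesis by simp
  qed
  also have "\<dots> = mat_adjoint V * V * De * (mat_adjoint V * U)"
    unfolding eq' using Uc Vc cs by (simp add: assoc_mult_mat[of _ n n _ n _ n] mult_carrier_mat[of _ n n _ n])
  also have "\<dots> = De * W" using VV cs unfolding W_def by simp
  finally have WD: "W * Dd = De * W" .
  have WF: "W * Fd = Fe * W"
  proof (rule eq_matI)
    fix i j assume "i < dim_row (Fe * W)" "j < dim_col (Fe * W)"
    hence i: "i < n" and j: "j < n" using cs by auto
    have "(W * Dd) $$ (i,j) = (De * W) $$ (i,j)" using WD by simp
    hence "W $$ (i,j) * complex_of_real (d j) = complex_of_real (e i) * W $$ (i,j)"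
      using i j cs unfolding Dd_def De_def
      by (simp add: mat_diag_mult_right[of _ n] mat_diag_mult_left[of _ n])
    hence "W $$ (i,j) = 0 \<or> d j = e i" by (auto simp: mult.commute)
    hence "W $$ (i,j) * complex_of_real (f (d j)) = complex_of_real (f (e i)) * W $$ (i,j)" by auto
    thus "(W * Fd) $$ (i,j) = (Fe * W) $$ (i,j)"
      using i j cs unfolding Fd_def Fe_def
      by (simp add: mat_diag_mult_right[of _ n] mat_diag_mult_left[of _ n])
  qed (use cs in auto)
  have "U * Fd * mat_adjoint U = V * (W * Fd) * mat_adjoint U"
  proof -
    have "V * (W * Fd) * mat_adjoint U = (V * mat_adjoint V) * U * Fd * mat_adjoint U"
      unfolding W_def using Uc Vc cs by (simp add: assoc_mult_mat[of _ n n _ n _ n] mult_carrier_mat[of _ n n _ n])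
    thus ?thesis using VV Uc by simp
  qed
  also have "\<dots> = V * (Fe * W) * mat_adjoint U" by (simp only: WF)
  also have "\<dots> = V * Fe * (mat_adjoint V * (U * mat_adjoint U))"
    unfolding W_def using Uc Vc cs by (simp add: assoc_mult_mat[of _ n n _ n _ n] mult_carrier_mat[of _ n n _ n])
  also have "\<dots> = V * Fe * mat_adjoint V" using UU cs Vc by simp
  finally show ?thesis unfolding Fd_def Fe_def .
qed

lemma powr_eq:
  assumes A: "A \<in> carrier_mat n n" and U: "unitary_mat n U" and d: "\<forall>i<n. d i \<ge> 0"
    and Ad: "A = U * mat_diag n (\<lambda>i. complex_of_real (d i)) * mat_adjoint U"
  shows "mat_powr A p = U * mat_diag n (\<lambda>i. complex_of_real (d i powr p)) * mat_adjoint U"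
proof -
  let ?P = "\<lambda>B. \<exists>n U d. A \<in> carrier_mat n n \<and> unitary_mat n U \<and> (\<forall>i<n. d i \<ge> 0) \<and>
      A = U * mat_diag n (\<lambda>i. complex_of_real (d i)) * mat_adjoint U \<and>
      B = U * mat_diag n (\<lambda>i. complex_of_real (d i powr p)) * mat_adjoint U"
  have ex: "\<exists>B. ?P B" using A U d Ad by blast
  from someI_ex[OF ex] obtain m V e where
    m: "A \<in> carrier_mat m m" and V: "unitary_mat m V" and
    Ae: "A = V * mat_diag m (\<lambda>i. complex_of_real (e i)) * mat_adjoint V" and
    B: "(SOME B. ?P B) = V * mat_diag m (\<lambda>i. complex_of_real (e i powr p)) * mat_adjoint V"
    by blast
  have "m = n" using m A by auto
  have "mat_powr A p = V * mat_diag n (\<lambda>i. complex_of_real (e i powr p)) * mat_adjoint V"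
    unfolding mat_powr_def using B \<open>m = n\<close> by simp
  also have "\<dots> = U * mat_diag n (\<lambda>i. complex_of_real (d i powr p)) * mat_adjoint U"
    by (rule spec_unique[OF V[unfolded \<open>m = n\<close>] U, where d=e and e=d and f="\<lambda>x. x powr p"])
      (use Ad Ae \<open>m = n\<close> in simp)
  finally show ?thesis .
qed

lemma HH:
  assumes x: "x \<in> carrier_vec n" and nx: "(\<Sum>i<n. cmod (x $ i) ^ 2) = 1" and k: "k < n"
  shows "\<exists>U. unitary_mat n U \<and> (\<forall>i<n. U $$ (i,k) = x $ i) \<and>
     (\<forall>i<n. \<forall>j<n. j \<noteq> k \<and> x $ j = 0 \<longrightarrow> U $$ (i,j) = (if i = j then 1 else 0))"
proof -
  define r where "r = cmod (x $ k)"
  define \<mu> where "\<mu> = (if x $ k = 0 then 1 else x $ k / complex_of_real r)"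
  have mu1: "cmod \<mu> = 1" unfolding \<mu>_def r_def by (simp add: norm_divide)
  have mucnj: "\<mu> * cnj \<mu> = 1" using mu1 by (metis complex_norm_square of_real_1 power_one)
  have xk: "x $ k = complex_of_real r * \<mu>" unfolding \<mu>_def r_def by auto
  define w where "w i = x $ i - (if i = k then \<mu> else 0)" for i
  have wk: "w k = complex_of_real (r - 1) * \<mu>" unfolding w_def using xk by (simp add: algebra_simps)
  define N where "N = (\<Sum>i<n. cmod (w i) ^ 2)"
  have "N = cmod (w k) ^ 2 + (\<Sum>i\<in>{..<n} - {k}. cmod (w i) ^ 2)"
    unfolding N_def using k by (subst sum.remove[of _ k]) auto
  also have "(\<Sum>i\<in>{..<n} - {k}. cmod (w i) ^ 2) = (\<Sum>i\<in>{..<n} - {k}. cmod (x $ i) ^ 2)"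
    by (rule sum.cong) (auto simp: w_def)
  also have "\<dots> = 1 - cmod (x $ k) ^ 2"
    using nx k by (subst (asm) sum.remove[of _ k]) auto
  also have "cmod (w k) ^ 2 = (r - 1)^2" unfolding wk norm_mult mu1 norm_of_real by simp
  finally have N: "N = 2 - 2 * r" unfolding r_def by (simp add: power2_eq_square algebra_simps)
  define t where "t = 2 / N"
  have N0: "N \<ge> 0" unfolding N_def by (simp add: sum_nonneg)
  have key: "complex_of_real (t * N) * w i = 2 * w i" if "i < n" for i
  proof (cases "N = 0")
    case True
    hence "\<forall>i\<in>{..<n}. cmod (w i) ^ 2 = 0" unfolding N_def by (subst (asm) sum_nonneg_eq_0_iff) auto
    thus ?thesis using that by auto
  next
    case False thus ?thesis unfolding t_def by simp
  qed
  have t2: "t * t * N = 2 * t" unfolding t_def by (cases "N = 0") (auto simp: field_simps)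
  define H where "H i j = (if i = j then 1 else 0) - complex_of_real t * w i * cnj (w j)" for i j
  define D where "D j = (if j = k then \<mu> else 1)" for j
  define U where "U = Matrix.mat n n (\<lambda>(i,j). H i j * D j)"
  have Uc: "U \<in> carrier_mat n n" unfolding U_def by simp
  have Uidx: "U $$ (i,j) = H i j * D j" if "i < n" "j < n" for i j unfolding U_def using that by simp
  have Hc: "cnj (H l i) = H i l" for l i unfolding H_def by auto
  have Dc: "cnj (D i) * D i = 1" for i unfolding D_def using mucnj by (auto simp: mult.commute)
  have HH: "(\<Sum>l<n. H i l * H l j) = (if i = j then 1 else 0)" if "i < n" "j < n" for i j
  proof -
    have "(\<Sum>l<n. H i l * H l j) = (\<Sum>l<n. (if l = i then (if i = j then 1 else 0) else 0)
        - (if l = i then complex_of_real t * w l * cnj (w j) else 0)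
        - (if l = j then complex_of_real t * w i * cnj (w l) else 0)
        + (complex_of_real t * complex_of_real t * w i * cnj (w j)) * (w l * cnj (w l)))"
      unfolding H_def by (rule sum.cong) (auto simp: algebra_simps)
    also have "\<dots> = (if i = j then 1 else 0) - complex_of_real t * w i * cnj (w j)
        - complex_of_real t * w i * cnj (w j)
        + (complex_of_real t * complex_of_real t * w i * cnj (w j)) * (\<Sum>l<n. w l * cnj (w l))"
      using that by (simp add: sum.distrib sum_subtractf sum_distrib_left[symmetric] sum.delta')
    also have "(\<Sum>l<n. w l * cnj (w l)) = complex_of_real N"
      unfolding N_def by (simp flip: complex_norm_square)
    also have "complex_of_real t * complex_of_real t * w i * cnj (w j) * complex_of_real N
        = complex_of_real (t * t * N) * w i * cnj (w j)" by simp
    also have "\<dots> = 2 * complex_of_real t * w i * cnj (w j)" unfolding t2 by simp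
    finally show ?thesis by simp
  qed
  have UU: "mat_adjoint U * U = 1\<^sub>m n"
  proof (rule eq_matI)
    fix i j assume "i < dim_row (1\<^sub>m n :: complex mat)" "j < dim_col (1\<^sub>m n :: complex mat)"
    hence i: "i < n" and j: "j < n" by auto
    have "(mat_adjoint U * U) $$ (i,j) = (\<Sum>l<n. cnj (U $$ (l,i)) * U $$ (l,j))"
      using Uc i j by (simp add: mult_idx[of _ n n _ n] del: index_mult_mat)
    also have "\<dots> = (\<Sum>l<n. cnj (D i) * D j * (H i l * H l j))"
      by (rule sum.cong) (use i j in \<open>simp_all add: Uidx Hc ac_simps\<close>)
    also have "\<dots> = cnj (D i) * D j * (if i = j then 1 else 0)"
      using HH[OF i j] by (simp add: sum_distrib_left[symmetric])
    also have "\<dots> = 1\<^sub>m n $$ (i,j)" using i j Dc by auto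
    finally show "(mat_adjoint U * U) $$ (i,j) = 1\<^sub>m n $$ (i,j)" .
  qed (use Uc in auto)
  have UU2: "U * mat_adjoint U = 1\<^sub>m n"
    by (rule mat_mult_left_right_inverse[OF adj_carrier[OF Uc] Uc UU])
  have unit: "unitary_mat n U" unfolding unitary_mat_def using Uc UU UU2 by auto
  have colk: "U $$ (i,k) = x $ i" if i: "i < n" for i
  proof -
    have "U $$ (i,k) = (if i = k then \<mu> else 0) - complex_of_real t * w i * (cnj (w k) * \<mu>)"
      unfolding Uidx[OF i k] H_def D_def by (simp add: algebra_simps)
    also have "cnj (w k) * \<mu> = complex_of_real (r - 1)" unfolding wk using mucnj
      by (simp add: algebra_simps)
    also have "complex_of_real t * w i * complex_of_real (r - 1) = - (complex_of_real (t * N) * w i) / 2"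
      unfolding N by (simp add: algebra_simps)
    also have "\<dots> = - w i" using key[OF i] by simp
    finally show ?thesis unfolding w_def by simp
  qed
  have colj: "U $$ (i,j) = (if i = j then 1 else 0)" if "i < n" "j < n" "j \<noteq> k" "x $ j = 0" for i j
  proof -
    have "w j = 0" using that unfolding w_def by simp
    hence "H i j = (if i = j then 1 else 0)" unfolding H_def by simp
    moreover have "D j = 1" unfolding D_def using that by simp
    ultimately show ?thesis unfolding Uidx[OF that(1,2)] by simp
  qed
  show ?thesis by (rule exI[of _ U]) (use unit colk colj in simp)
qed

lemma conj_diag_idx: assumes U: "(U :: complex mat) \<in> carrier_mat n n" and i: "i < n" and j: "j < n"
  shows "(U * mat_diag n f * mat_adjoint U) $$ (i,j) = (\<Sum>l<n. U $$ (i,l) * f l * cnj (U $$ (j,l)))"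
proof -
  have c: "U * mat_diag n f \<in> carrier_mat n n" using U by simp
  have "(U * mat_diag n f * mat_adjoint U) $$ (i,j) = (\<Sum>l<n. (U * mat_diag n f) $$ (i,l) * mat_adjoint U $$ (l,j))"
    by (rule mult_idx[OF c adj_carrier[OF U] i j])
  also have "\<dots> = (\<Sum>l<n. U $$ (i,l) * f l * cnj (U $$ (j,l)))"
    by (rule sum.cong[OF refl]) (use U i j in \<open>simp add: mat_diag_mult_right[OF U]\<close>)
  finally show ?thesis .
qed

lemma adjoint_mult: assumes A: "(A :: complex mat) \<in> carrier_mat n n" and B: "B \<in> carrier_mat n n"
  shows "mat_adjoint (A * B) = mat_adjoint B * mat_adjoint A"
proof (rule eq_matI)
  fix i j assume "i < dim_row (mat_adjoint B * mat_adjoint A)" "j < dim_col (mat_adjoint B * mat_adjoint A)"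
  hence i: "i < n" and j: "j < n" using A B by auto
  have "mat_adjoint (A * B) $$ (i,j) = cnj ((A * B) $$ (j,i))" using A B i j by simp
  also have "\<dots> = (\<Sum>l<n. cnj (B $$ (l,i)) * cnj (A $$ (j,l)))"
    by (simp add: mult_idx[OF A B j i] mult.commute)
  also have "\<dots> = (mat_adjoint B * mat_adjoint A) $$ (i,j)"
    by (simp add: mult_idx[OF adj_carrier[OF B] adj_carrier[OF A] i j] del: index_mult_mat)
      (rule sum.cong, use A B i j in auto)
  finally show "mat_adjoint (A * B) $$ (i,j) = (mat_adjoint B * mat_adjoint A) $$ (i,j)" .
qed (use A B in auto)

lemma unitary_mult: assumes A: "unitary_mat n A" and B: "unitary_mat n B"
  shows "unitary_mat n (A * B)"
proof -
  have Ac: "A \<in> carrier_mat n n" and Bc: "B \<in> carrier_mat n n" using A B unitary_carrier by auto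
  have AA: "mat_adjoint A * A = 1\<^sub>m n" and BB: "mat_adjoint B * B = 1\<^sub>m n"
    using A B unfolding unitary_mat_def by auto
  have "mat_adjoint (A * B) * (A * B) = mat_adjoint B * (mat_adjoint A * A) * B"
    unfolding adjoint_mult[OF Ac Bc] using Ac Bc
    by (simp add: assoc_mult_mat[of _ n n _ n _ n] mult_carrier_mat[of _ n n _ n])
  also have "\<dots> = 1\<^sub>m n" using AA BB Bc by simp
  finally have L: "mat_adjoint (A * B) * (A * B) = 1\<^sub>m n" .
  have AB: "A * B \<in> carrier_mat n n" using Ac Bc by simp
  have R: "(A * B) * mat_adjoint (A * B) = 1\<^sub>m n"
    by (rule mat_mult_left_right_inverse[OF adj_carrier[OF AB] AB L])
  show ?thesis unfolding unitary_mat_def using AB L R by auto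
qed

lemma n_pos: assumes "(\<Sum>i<n. cmod (x $ i) ^ 2) = 1" shows "0 < n"
  using assms by (cases n) auto

lemma G1: assumes u: "u \<in> carrier_vec n" and nu: "(\<Sum>i<n. cmod (u $ i) ^ 2) = 1" and lam: "lam \<ge> 0"
  shows "psd_mat (Matrix.mat n n (\<lambda>(i,j). complex_of_real lam * u $ i * cnj (u $ j)))"
proof -
  have n: "0 < n" using n_pos[OF nu] .
  obtain U where U: "unitary_mat n U" and col: "\<forall>i<n. U $$ (i,0) = u $ i"
    using HH[OF u nu n] by blast
  have Uc: "U \<in> carrier_mat n n" using U unitary_carrier by auto
  define d where "d i = (if i = 0 then lam else 0)" for i :: nat
  have "Matrix.mat n n (\<lambda>(i,j). complex_of_real lam * u $ i * cnj (u $ j))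
      = U * mat_diag n (\<lambda>i. complex_of_real (d i)) * mat_adjoint U"
  proof (rule eq_matI)
    fix i j assume "i < dim_row (U * mat_diag n (\<lambda>i. complex_of_real (d i)) * mat_adjoint U)"
      "j < dim_col (U * mat_diag n (\<lambda>i. complex_of_real (d i)) * mat_adjoint U)"
    hence i: "i < n" and j: "j < n" using Uc by auto
    have "(U * mat_diag n (\<lambda>i. complex_of_real (d i)) * mat_adjoint U) $$ (i,j)
        = (\<Sum>l<n. if l = 0 then U $$ (i,0) * complex_of_real lam * cnj (U $$ (j,0)) else 0)"
      unfolding conj_diag_idx[OF Uc i j] by (rule sum.cong) (auto simp: d_def)
    also have "\<dots> = complex_of_real lam * u $ i * cnj (u $ j)"
      using n col i j by (simp add: sum.delta')
    finally show "Matrix.mat n n (\<lambda>(i,j). complex_of_real lam * u $ i * cnj (u $ j)) $$ (i,j)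
      = (U * mat_diag n (\<lambda>i. complex_of_real (d i)) * mat_adjoint U) $$ (i,j)" using i j by simp
  qed (use Uc in auto)
  moreover have "\<forall>i<n. d i \<ge> 0" using lam by (auto simp: d_def)
  ultimately show ?thesis unfolding psd_mat_def using U Uc by (intro exI[of _ n] exI[of _ U] exI[of _ d]) (auto simp: mult_carrier_mat[of _ n n _ n])
qed


lemma G2: assumes u: "u \<in> carrier_vec n" and nu: "(\<Sum>i<n. cmod (u $ i) ^ 2) = 1"
  and v: "v \<in> carrier_vec n" and nv: "(\<Sum>i<n. cmod (v $ i) ^ 2) = 1"
  and orth: "(\<Sum>i<n. u $ i * cnj (v $ i)) = 0"
  and lam: "lam \<ge> 0" and lam': "lam' \<ge> 0"
  shows "psd_mat (Matrix.mat n n (\<lambda>(i,j). complex_of_real lam * u $ i * cnj (u $ j)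
                                    + complex_of_real lam' * v $ i * cnj (v $ j)))"
proof -
  have n: "0 < n" using n_pos[OF nu] .
  obtain U1 where U1: "unitary_mat n U1" and col1: "\<forall>i<n. U1 $$ (i,0) = u $ i"
    using HH[OF u nu n] by blast
  have U1c: "U1 \<in> carrier_mat n n" using U1 unitary_carrier by auto
  define z where "z = mat_adjoint U1 *\<^sub>v v"
  have zc: "z \<in> carrier_vec n" unfolding z_def by (rule mult_mat_vec_carrier[OF adj_carrier[OF U1c] v])
  have nz: "(\<Sum>i<n. cmod (z $ i) ^ 2) = 1" unfolding z_def norm_pres[OF U1 v] by (rule nv)
  have zidx: "z $ i = (\<Sum>m<n. cnj (U1 $$ (m,i)) * v $ m)" if "i < n" for i
    using U1c v that unfolding z_def by (simp add: scalar_prod_def atLeast0LessThan)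
  have "z $ 0 = (\<Sum>m<n. cnj (u $ m) * v $ m)" using zidx[OF n] col1 by simp
  also have "\<dots> = cnj (\<Sum>m<n. u $ m * cnj (v $ m))" by (simp add: mult.commute)
  finally have z0: "z $ 0 = 0" using orth by simp
  have n1: "1 < n"
  proof (rule ccontr)
    assume "\<not> 1 < n" hence "n = 1" using n by auto
    thus False using nz z0 by simp
  qed
  obtain U2 where U2: "unitary_mat n U2" and col2: "\<forall>i<n. U2 $$ (i,1) = z $ i"
    and colj: "\<forall>i<n. \<forall>j<n. j \<noteq> 1 \<and> z $ j = 0 \<longrightarrow> U2 $$ (i,j) = (if i = j then 1 else 0)"
    using HH[OF zc nz n1] by blast
  have U2c: "U2 \<in> carrier_mat n n" using U2 unitary_carrier by auto
  define U where "U = U1 * U2"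
  have U: "unitary_mat n U" unfolding U_def by (rule unitary_mult[OF U1 U2])
  have Uc: "U \<in> carrier_mat n n" using U unitary_carrier by auto
  have c0: "U $$ (i,0) = u $ i" if i: "i < n" for i
  proof -
    have "U $$ (i,0) = (\<Sum>l<n. U1 $$ (i,l) * U2 $$ (l,0))" unfolding U_def by (rule mult_idx[OF U1c U2c i n])
    also have "\<dots> = (\<Sum>l<n. if l = 0 then U1 $$ (i,0) else 0)"
      by (rule sum.cong) (use colj z0 n in auto)
    also have "\<dots> = u $ i" using n col1 i by simp
    finally show ?thesis .
  qed
  have c1: "U $$ (i,1) = v $ i" if i: "i < n" for i
  proof -
    have "U $$ (i,1) = (\<Sum>l<n. U1 $$ (i,l) * U2 $$ (l,1))" unfolding U_def by (rule mult_idx[OF U1c U2c i n1])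
    also have "\<dots> = (\<Sum>l<n. U1 $$ (i,l) * z $ l)" by (rule sum.cong) (use col2 in auto)
    also have "\<dots> = (U1 *\<^sub>v z) $ i" using U1c zc i by (simp add: scalar_prod_def atLeast0LessThan)
    also have "U1 *\<^sub>v z = (U1 * mat_adjoint U1) *\<^sub>v v" unfolding z_def
      using U1c v by (simp add: assoc_mult_mat_vec[of _ n n _ n])
    also have "\<dots> = v" using U1 v unfolding unitary_mat_def by simp
    finally show ?thesis .
  qed
  define d where "d i = (if i = 0 then lam else if i = 1 then lam' else 0)" for i :: nat
  have E: "Matrix.mat n n (\<lambda>(i,j). complex_of_real lam * u $ i * cnj (u $ j)
                                    + complex_of_real lam' * v $ i * cnj (v $ j))
      = U * mat_diag n (\<lambda>i. complex_of_real (d i)) * mat_adjoint U"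
  proof (rule eq_matI)
    fix i j assume "i < dim_row (U * mat_diag n (\<lambda>i. complex_of_real (d i)) * mat_adjoint U)"
      "j < dim_col (U * mat_diag n (\<lambda>i. complex_of_real (d i)) * mat_adjoint U)"
    hence i: "i < n" and j: "j < n" using Uc by auto
    have "(U * mat_diag n (\<lambda>i. complex_of_real (d i)) * mat_adjoint U) $$ (i,j)
        = (\<Sum>l<n. (if l = 0 then U $$ (i,0) * complex_of_real lam * cnj (U $$ (j,0)) else 0)
             + (if l = 1 then U $$ (i,1) * complex_of_real lam' * cnj (U $$ (j,1)) else 0))"
      unfolding conj_diag_idx[OF Uc i j] by (rule sum.cong) (auto simp: d_def)
    also have "\<dots> = complex_of_real lam * u $ i * cnj (u $ j) + complex_of_real lam' * v $ i * cnj (v $ j)"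
      using n n1 c0 c1 i j by (simp add: sum.distrib sum.delta')
    finally show "Matrix.mat n n (\<lambda>(i,j). complex_of_real lam * u $ i * cnj (u $ j)
                                    + complex_of_real lam' * v $ i * cnj (v $ j)) $$ (i,j)
      = (U * mat_diag n (\<lambda>i. complex_of_real (d i)) * mat_adjoint U) $$ (i,j)" using i j by simp
  qed (use Uc in auto)
  moreover have "\<forall>i<n. d i \<ge> 0" using lam lam' by (auto simp: d_def)
  ultimately show ?thesis unfolding psd_mat_def using U Uc
    by (intro exI[of _ n] exI[of _ U] exI[of _ d]) (auto simp: mult_carrier_mat[of _ n n _ n])
qed


lemma mat_cong: "(\<And>i j. i < n \<Longrightarrow> j < m \<Longrightarrow> f (i,j) = g (i,j)) \<Longrightarrow> Matrix.mat n m f = Matrix.mat n m g"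
  by (rule eq_matI) auto

lemma zero_vec_of_norm: assumes "(\<Sum>i<n. cmod (x $ i) ^ 2) = 0" "i < n" shows "x $ i = 0"
proof -
  have "\<forall>i\<in>{..<n}. cmod (x $ i) ^ 2 = 0" using assms(1) by (subst (asm) sum_nonneg_eq_0_iff) auto
  thus ?thesis using assms(2) by auto
qed

lemma normalize_vec: assumes x: "x \<in> carrier_vec n" and a: "a = (\<Sum>i<n. cmod (x $ i) ^ 2)" and a0: "a > 0"
  defines "xh \<equiv> vec n (\<lambda>i. x $ i / complex_of_real (sqrt a))"
  shows "xh \<in> carrier_vec n" "(\<Sum>i<n. cmod (xh $ i) ^ 2) = 1"
    "\<And>i j. i < n \<Longrightarrow> j < n \<Longrightarrow> complex_of_real a * xh $ i * cnj (xh $ j) = x $ i * cnj (x $ j)"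
    "\<And>i. i < n \<Longrightarrow> x $ i = complex_of_real (sqrt a) * xh $ i"
proof -
  show "xh \<in> carrier_vec n" unfolding xh_def by simp
  have "(\<Sum>i<n. cmod (xh $ i) ^ 2) = (\<Sum>i<n. cmod (x $ i) ^ 2 / a)"
    unfolding xh_def by (rule sum.cong) (use a0 in \<open>auto simp: norm_divide power_divide\<close>)
  also have "\<dots> = 1" unfolding sum_divide_distrib[symmetric] a[symmetric] using a0 by simp
  finally show "(\<Sum>i<n. cmod (xh $ i) ^ 2) = 1" .
  have sa: "complex_of_real (sqrt a) * complex_of_real (sqrt a) = complex_of_real a"
    using a0 by (simp flip: of_real_mult)
  show "complex_of_real a * xh $ i * cnj (xh $ j) = x $ i * cnj (x $ j)" if "i < n" "j < n" for i j
    unfolding xh_def using that a0 sa by (simp add: field_simps)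
  show "x $ i = complex_of_real (sqrt a) * xh $ i" if "i < n" for i
    unfolding xh_def using that a0 by simp
qed

lemma G2': assumes x: "x \<in> carrier_vec n" and y: "y \<in> carrier_vec n" and n: "0 < n"
  and orth: "(\<Sum>i<n. x $ i * cnj (y $ i)) = 0"
  shows "psd_mat (Matrix.mat n n (\<lambda>(i,j). x $ i * cnj (x $ j) + y $ i * cnj (y $ j)))"
proof -
  define a where "a = (\<Sum>i<n. cmod (x $ i) ^ 2)"
  define b where "b = (\<Sum>i<n. cmod (y $ i) ^ 2)"
  have a0: "a \<ge> 0" and b0: "b \<ge> 0" unfolding a_def b_def by (auto intro: sum_nonneg)
  define xh where "xh = vec n (\<lambda>i. x $ i / complex_of_real (sqrt a))"
  define yh where "yh = vec n (\<lambda>i. y $ i / complex_of_real (sqrt b))"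
  show ?thesis
  proof (cases "a = 0")
    case az: True
    hence xz: "x $ i = 0" if "i < n" for i using zero_vec_of_norm that unfolding a_def by blast
    show ?thesis
    proof (cases "b = 0")
      case True
      hence yz: "y $ i = 0" if "i < n" for i using zero_vec_of_norm that unfolding b_def by blast
      have e: "unit_vec n 0 \<in> carrier_vec n" by simp
      have ne: "(\<Sum>i<n. cmod (unit_vec n 0 $ i) ^ 2) = 1"
      proof -
        have "(\<Sum>i<n. cmod (unit_vec n 0 $ i) ^ 2) = (\<Sum>i<n. if i = 0 then 1 else 0)"
          by (rule sum.cong) (auto simp: unit_vec_def)
        thus ?thesis using n by simp
      qed
      show ?thesis using G1[OF e ne order.refl] xz yz by (subst mat_cong[where g="\<lambda>(i,j). complex_of_real 0 * unit_vec n 0 $ i * cnj (unit_vec n 0 $ j)"]) auto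
    next
      case False
      hence bp: "b > 0" using b0 by simp
      note N = normalize_vec[OF y b_def bp, folded yh_def]
      show ?thesis using G1[OF N(1) N(2) b0] by (subst mat_cong[where g="\<lambda>(i,j). complex_of_real b * yh $ i * cnj (yh $ j)"]) (auto simp: xz N(3))
    qed
  next
    case False
    hence ap: "a > 0" using a0 by simp
    note Nx = normalize_vec[OF x a_def ap, folded xh_def]
    show ?thesis
    proof (cases "b = 0")
      case True
      hence yz: "y $ i = 0" if "i < n" for i using zero_vec_of_norm that unfolding b_def by blast
      show ?thesis using G1[OF Nx(1) Nx(2) a0] by (subst mat_cong[where g="\<lambda>(i,j). complex_of_real a * xh $ i * cnj (xh $ j)"]) (auto simp: yz Nx(3))
    next
      case False
      hence bp: "b > 0" using b0 by simp
      note Ny = normalize_vec[OF y b_def bp, folded yh_def]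
      have "(\<Sum>i<n. x $ i * cnj (y $ i)) = complex_of_real (sqrt a) * cnj (complex_of_real (sqrt b)) * (\<Sum>i<n. xh $ i * cnj (yh $ i))"
        by (simp add: sum_distrib_left Nx(4) Ny(4) mult_ac)
      hence o: "(\<Sum>i<n. xh $ i * cnj (yh $ i)) = 0" using orth ap bp by simp
      show ?thesis using G2[OF Nx(1) Nx(2) Ny(1) Ny(2) o a0 b0]
        by (subst mat_cong[where g="\<lambda>(i,j). complex_of_real a * xh $ i * cnj (xh $ j) + complex_of_real b * yh $ i * cnj (yh $ j)"]) (auto simp: Nx(3) Ny(3))
    qed
  qed
qed

lemma DX: fixes f :: "nat \<Rightarrow> complex" assumes U: "unitary_mat n U" and A: "A = U * mat_diag n f * mat_adjoint U"
  shows "mat_adjoint U * A * U = mat_diag n f"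
proof -
  have Uc: "U \<in> carrier_mat n n" using U unitary_carrier by auto
  have UU: "mat_adjoint U * U = 1\<^sub>m n" using U unfolding unitary_mat_def by auto
  have "mat_adjoint U * A * U = (mat_adjoint U * U) * mat_diag n f * (mat_adjoint U * U)"
    unfolding A using Uc by (simp add: assoc_mult_mat[of _ n n _ n _ n] mult_carrier_mat[of _ n n _ n])
  also have "\<dots> = mat_diag n f" unfolding UU
    using left_mult_one_mat[OF mat_diag_dim[of n f]] right_mult_one_mat[OF mat_diag_dim[of n f]] by simp
  finally show ?thesis .
qed

lemma psd_decomp: assumes "psd_mat A" "A \<in> carrier_mat n n"
  shows "\<exists>U d. unitary_mat n U \<and> (\<forall>i<n. d i \<ge> 0) \<and> A = U * mat_diag n (\<lambda>i. complex_of_real (d i)) * mat_adjoint U"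
proof -
  obtain m U d where "A \<in> carrier_mat m m" "unitary_mat m U" "\<forall>i<m. d i \<ge> 0"
    "A = U * mat_diag m (\<lambda>i. complex_of_real (d i)) * mat_adjoint U"
    using assms(1) unfolding psd_mat_def by blast
  moreover have "m = n" using calculation(1) assms(2) by auto
  ultimately show ?thesis by blast
qed

lemma diag_cong: "(\<And>i. i < n \<Longrightarrow> f i = g i) \<Longrightarrow> mat_diag n f = mat_diag n g"
  unfolding mat_diag_def by (rule mat_cong) auto

lemma TR: assumes U: "(U :: complex mat) \<in> carrier_mat n n" and X: "X \<in> carrier_mat n n"
  shows "mtrace (X * (U * mat_diag n f * mat_adjoint U)) = (\<Sum>i<n. (mat_adjoint U * X * U) $$ (i,i) * f i)"
proof -
  have D: "mat_diag n f \<in> carrier_mat n n" by simp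
  have "X * (U * mat_diag n f * mat_adjoint U) = (X * U * mat_diag n f) * mat_adjoint U"
    using U X by (simp add: assoc_mult_mat[of _ n n _ n _ n] mult_carrier_mat[of _ n n _ n])
  hence "mtrace (X * (U * mat_diag n f * mat_adjoint U)) = mtrace (mat_adjoint U * (X * U * mat_diag n f))"
    using mtrace_comm[of "X * U * mat_diag n f" n n "mat_adjoint U"] U X
    by (simp add: mult_carrier_mat[of _ n n _ n])
  also have "mat_adjoint U * (X * U * mat_diag n f) = (mat_adjoint U * X * U) * mat_diag n f"
    using U X by (simp add: assoc_mult_mat[of _ n n _ n _ n] mult_carrier_mat[of _ n n _ n])
  also have "mtrace \<dots> = (\<Sum>i<n. (mat_adjoint U * X * U) $$ (i,i) * f i)"
  proof -
    have Y: "mat_adjoint U * X * U \<in> carrier_mat n n" using U X by (simp add: mult_carrier_mat[of _ n n _ n])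
    show ?thesis using Y by (simp add: mtrace_sum[of _ n] mat_diag_mult_right[OF Y])
  qed
  finally show ?thesis .
qed

lemma rho_psd: assumes psi: "\<psi> \<in> carrier_vec n"
  shows "ket_bra \<psi> = Matrix.mat n n (\<lambda>(i,j). complex_of_real 1 * \<psi> $ i * cnj (\<psi> $ j))"
  unfolding ket_bra_def carrier_vecD[OF psi] by (intro mat_cong) auto

lemma rho_powr: assumes psi: "\<psi> \<in> carrier_vec n" and npsi: "(\<Sum>i<n. cmod (\<psi> $ i) ^ 2) = 1"
  shows "mat_powr (ket_bra \<psi>) p = ket_bra \<psi>"
proof -
  have psd: "psd_mat (ket_bra \<psi>)" unfolding rho_psd[OF psi] by (rule G1[OF psi npsi]) simp
  obtain U d where U: "unitary_mat n U" and d: "\<forall>i<n. d i \<ge> 0"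
    and A: "ket_bra \<psi> = U * mat_diag n (\<lambda>i. complex_of_real (d i)) * mat_adjoint U"
    using psd_decomp[OF psd ket_bra_carrier[OF psi]] by blast
  have Uc: "U \<in> carrier_mat n n" using U unitary_carrier by auto
  define a where "a = mat_adjoint U *\<^sub>v \<psi>"
  have ac: "a \<in> carrier_vec n" unfolding a_def by (rule mult_mat_vec_carrier[OF adj_carrier[OF Uc] psi])
  have na: "(\<Sum>i<n. cmod (a $ i) ^ 2) = 1" unfolding a_def norm_pres[OF U psi] by (rule npsi)
  have KD: "ket_bra a = mat_diag n (\<lambda>i. complex_of_real (d i))"
    using DX[OF U A] K1[OF Uc psi] unfolding a_def by simp
  have ent: "a $ i * cnj (a $ j) = (if i = j then complex_of_real (d j) else 0)" if "i < n" "j < n" for i j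
  proof -
    have "ket_bra a $$ (i,j) = mat_diag n (\<lambda>i. complex_of_real (d i)) $$ (i,j)" using KD by simp
    thus ?thesis using that ac by (simp add: ket_bra_idx diag_idx)
  qed
  have dd: "d i powr p = d i" if i: "i < n" for i
  proof -
    have "complex_of_real (d i) = complex_of_real (cmod (a $ i) ^ 2)"
      using ent[OF i i] by (simp flip: complex_norm_square)
    hence di: "d i = cmod (a $ i) ^ 2" by (simp only: of_real_eq_iff)
    show ?thesis
    proof (cases "a $ i = 0")
      case True thus ?thesis using di by simp
    next
      case False
      have oz: "a $ j = 0" if "j < n" "j \<noteq> i" for j using ent[OF i that(1)] that False by simp
      have "1 = cmod (a $ i) ^ 2 + (\<Sum>j\<in>{..<n} - {i}. cmod (a $ j) ^ 2)"
        using na i by (subst (asm) sum.remove[of _ i]) auto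
      also have "(\<Sum>j\<in>{..<n} - {i}. cmod (a $ j) ^ 2) = 0" by (rule sum.neutral) (auto simp: oz)
      finally have "d i = 1" using di by simp
      thus ?thesis by simp
    qed
  qed
  have "mat_powr (ket_bra \<psi>) p = U * mat_diag n (\<lambda>i. complex_of_real (d i powr p)) * mat_adjoint U"
    by (rule powr_eq[OF ket_bra_carrier[OF psi] U d A])
  also have "mat_diag n (\<lambda>i. complex_of_real (d i powr p)) = mat_diag n (\<lambda>i. complex_of_real (d i))"
    by (rule diag_cong) (simp add: dd)
  finally show ?thesis using A by simp
qed

lemma SC: fixes a b c :: complex and t :: real
  assumes e1: "complex_of_real t * a = c * b" and e2: "complex_of_real t * b = cnj c * a"
    and ne: "cmod a \<noteq> cmod b"
  shows "t = 0"
proof -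
  have r1: "\<bar>t\<bar> * cmod a = cmod c * cmod b" using arg_cong[OF e1, of cmod] by (simp add: norm_mult)
  have r2: "\<bar>t\<bar> * cmod b = cmod c * cmod a" using arg_cong[OF e2, of cmod] by (simp add: norm_mult)
  have "(\<bar>t\<bar> + cmod c) * (cmod a - cmod b) = 0" using r1 r2 by (simp add: algebra_simps)
  hence "\<bar>t\<bar> + cmod c = 0" using ne by simp
  thus ?thesis by (smt (verit) norm_ge_zero)
qed

lemma SL: fixes a b :: "nat \<Rightarrow> complex" and d :: "nat \<Rightarrow> real" and g :: "real \<Rightarrow> real"
  assumes h: "\<And>i j. i < n \<Longrightarrow> j < n \<Longrightarrow> (a i * cnj (a j) + b i * cnj (b j)) / 2 = (if i = j then complex_of_real (d j) else 0)"
    and na: "(\<Sum>i<n. cmod (a i) ^ 2) = 1" and nb: "(\<Sum>i<n. cmod (b i) ^ 2) = 1"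
  shows "(\<Sum>i<n. cmod (a i) ^ 2 * g (d i)) = (\<Sum>i<n. d i * g (d i))"
    and "(\<Sum>i<n. cmod (b i) ^ 2 * g (d i)) = (\<Sum>i<n. d i * g (d i))"
proof -
  have h2: "a i * cnj (a j) + b i * cnj (b j) = (if i = j then 2 * complex_of_real (d j) else 0)"
    if "i < n" "j < n" for i j using h[OF that] by (auto simp: field_simps split: if_splits)
  have dsum: "d i = (cmod (a i) ^ 2 + cmod (b i) ^ 2) / 2" if i: "i < n" for i
  proof -
    have "complex_of_real (2 * d i) = complex_of_real (cmod (a i) ^ 2 + cmod (b i) ^ 2)"
      using h2[OF i i] by (simp flip: complex_norm_square)
    hence "2 * d i = cmod (a i) ^ 2 + cmod (b i) ^ 2" by (simp only: of_real_eq_iff)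
    thus ?thesis by simp
  qed
  define c where "c = (\<Sum>j<n. cnj (b j) * a j)"
  have Sa: "(\<Sum>j<n. cnj (a j) * a j) = 1"
  proof -
    have "(\<Sum>j<n. cnj (a j) * a j) = complex_of_real (\<Sum>j<n. cmod (a j) ^ 2)"
      by (simp add: mult.commute flip: complex_norm_square)
    thus ?thesis using na by simp
  qed
  have Sb: "(\<Sum>j<n. cnj (b j) * b j) = 1"
  proof -
    have "(\<Sum>j<n. cnj (b j) * b j) = complex_of_real (\<Sum>j<n. cmod (b j) ^ 2)"
      by (simp add: mult.commute flip: complex_norm_square)
    thus ?thesis using nb by simp
  qed
  have Sab: "(\<Sum>j<n. cnj (a j) * b j) = cnj c" unfolding c_def by (simp add: mult.commute)
  have e1: "complex_of_real (2 * d i - 1) * a i = c * b i" if i: "i < n" for i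
  proof -
    have "(\<Sum>j<n. (a i * cnj (a j) + b i * cnj (b j)) * a j) = a i * (\<Sum>j<n. cnj (a j) * a j) + b i * c"
      unfolding c_def by (simp add: sum_distrib_left sum.distrib ring_distribs mult_ac)
    also have "\<dots> = a i + b i * c" using Sa by simp
    finally have 1: "(\<Sum>j<n. (a i * cnj (a j) + b i * cnj (b j)) * a j) = a i + b i * c" .
    have "(\<Sum>j<n. (a i * cnj (a j) + b i * cnj (b j)) * a j) = (\<Sum>j<n. if j = i then 2 * complex_of_real (d i) * a i else 0)"
      by (rule sum.cong) (use h2 i in auto)
    also have "\<dots> = 2 * complex_of_real (d i) * a i" using i by simp
    finally show ?thesis using 1 by (simp add: algebra_simps)
  qed
  have e2: "complex_of_real (2 * d i - 1) * b i = cnj c * a i" if i: "i < n" for i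
  proof -
    have "(\<Sum>j<n. (a i * cnj (a j) + b i * cnj (b j)) * b j) = a i * (\<Sum>j<n. cnj (a j) * b j) + b i * (\<Sum>j<n. cnj (b j) * b j)"
      by (simp add: sum_distrib_left sum.distrib ring_distribs mult_ac)
    also have "\<dots> = a i * cnj c + b i" using Sab Sb by simp
    finally have 1: "(\<Sum>j<n. (a i * cnj (a j) + b i * cnj (b j)) * b j) = a i * cnj c + b i" .
    have "(\<Sum>j<n. (a i * cnj (a j) + b i * cnj (b j)) * b j) = (\<Sum>j<n. if j = i then 2 * complex_of_real (d i) * b i else 0)"
      by (rule sum.cong) (use h2 i in auto)
    also have "\<dots> = 2 * complex_of_real (d i) * b i" using i by simp
    finally show ?thesis using 1 by (simp add: algebra_simps)
  qed
  have half: "d i = 1/2" if i: "i < n" and ne: "cmod (a i) ^ 2 \<noteq> cmod (b i) ^ 2" for i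
  proof -
    have "cmod (a i) \<noteq> cmod (b i)" using ne by auto
    hence "2 * d i - 1 = 0" using SC[OF e1[OF i] e2[OF i]] by simp
    thus ?thesis by simp
  qed
  have diff: "(\<Sum>i<n. cmod (a i) ^ 2 * g (d i)) - (\<Sum>i<n. cmod (b i) ^ 2 * g (d i)) = 0"
  proof -
    have "(\<Sum>i<n. cmod (a i) ^ 2 * g (d i)) - (\<Sum>i<n. cmod (b i) ^ 2 * g (d i))
        = (\<Sum>i<n. (cmod (a i) ^ 2 - cmod (b i) ^ 2) * g (d i))"
      by (simp add: sum_subtractf left_diff_distrib)
    also have "\<dots> = (\<Sum>i<n. (cmod (a i) ^ 2 - cmod (b i) ^ 2) * g (1/2))"
    proof (rule sum.cong[OF refl])
      fix i assume "i \<in> {..<n}"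
      thus "(cmod (a i) ^ 2 - cmod (b i) ^ 2) * g (d i) = (cmod (a i) ^ 2 - cmod (b i) ^ 2) * g (1/2)"
      proof (cases "cmod (a i) ^ 2 = cmod (b i) ^ 2")
        case False
        have "d i = 1/2" by (rule half) (use \<open>i \<in> {..<n}\<close> False in auto)
        thus ?thesis by (simp only:)
      qed simp
    qed
    also have "\<dots> = ((\<Sum>i<n. cmod (a i) ^ 2) - (\<Sum>i<n. cmod (b i) ^ 2)) * g (1/2)"
      by (simp only: sum_distrib_right[symmetric] sum_subtractf)
    also have "\<dots> = 0" using na nb by simp
    finally show ?thesis .
  qed
  have tot: "(\<Sum>i<n. cmod (a i) ^ 2 * g (d i)) + (\<Sum>i<n. cmod (b i) ^ 2 * g (d i)) = 2 * (\<Sum>i<n. d i * g (d i))"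
  proof -
    have "(\<Sum>i<n. cmod (a i) ^ 2 * g (d i)) + (\<Sum>i<n. cmod (b i) ^ 2 * g (d i))
        = (\<Sum>i<n. 2 * (d i * g (d i)))"
      unfolding sum.distrib[symmetric]
    proof (rule sum.cong[OF refl])
      fix i assume "i \<in> {..<n}"
      hence H: "cmod (a i) ^ 2 + cmod (b i) ^ 2 = 2 * d i" using dsum[of i] by simp
      have "cmod (a i) ^ 2 * g (d i) + cmod (b i) ^ 2 * g (d i) = (cmod (a i) ^ 2 + cmod (b i) ^ 2) * g (d i)"
        by (simp only: distrib_right)
      thus "cmod (a i) ^ 2 * g (d i) + cmod (b i) ^ 2 * g (d i) = 2 * (d i * g (d i))" unfolding H by simp
    qed
    thus ?thesis by (simp add: sum_distrib_left)
  qed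
  show "(\<Sum>i<n. cmod (a i) ^ 2 * g (d i)) = (\<Sum>i<n. d i * g (d i))" using diff tot by simp
  show "(\<Sum>i<n. cmod (b i) ^ 2 * g (d i)) = (\<Sum>i<n. d i * g (d i))" using diff tot by simp
qed

lemma mix_eq: assumes psi: "\<psi> \<in> carrier_vec n" and phi: "\<phi> \<in> carrier_vec n"
  shows "mixture (ket_bra \<psi>) (ket_bra \<phi>) = Matrix.mat n n (\<lambda>(i,j). (\<psi> $ i * cnj (\<psi> $ j) + \<phi> $ i * cnj (\<phi> $ j)) / 2)"
  by (rule eq_matI) (use psi phi in \<open>auto simp: mixture_def ket_bra_idx\<close>)

lemma M_psd: assumes psi: "\<psi> \<in> carrier_vec n" and phi: "\<phi> \<in> carrier_vec n"
  and npsi: "(\<Sum>i<n. cmod (\<psi> $ i) ^ 2) = 1" and nphi: "(\<Sum>i<n. cmod (\<phi> $ i) ^ 2) = 1"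
  shows "psd_mat (mixture (ket_bra \<psi>) (ket_bra \<phi>))"
proof -
  define c where "c = (\<Sum>i<n. \<psi> $ i * cnj (\<phi> $ i))"
  define \<mu> where "\<mu> = (if c = 0 then 1 else c / complex_of_real (cmod c))"
  have mu0: "\<mu> \<noteq> 0" unfolding \<mu>_def by auto
  have mu1: "cnj \<mu> * \<mu> = 1"
  proof -
    have "cmod \<mu> = 1" unfolding \<mu>_def by (simp add: norm_divide)
    thus ?thesis by (metis complex_norm_square mult.commute of_real_1 power_one)
  qed
  have cm: "cnj \<mu> = inverse \<mu>" using mu1 mu0 by (simp add: field_simps)
  have muc: "cnj \<mu> * c = \<mu> * cnj c"
  proof (cases "c = 0")
    case False
    have "cnj \<mu> * c = c * cnj c / complex_of_real (cmod c)" unfolding \<mu>_def using False by simp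
    also have "\<mu> * cnj c = c * cnj c / complex_of_real (cmod c)" unfolding \<mu>_def using False by simp
    finally show ?thesis by simp
  qed simp
  define x where "x = vec n (\<lambda>i. (\<psi> $ i + \<mu> * \<phi> $ i) / 2)"
  define y where "y = vec n (\<lambda>i. (\<psi> $ i - \<mu> * \<phi> $ i) / 2)"
  have S1: "(\<Sum>i<n. \<psi> $ i * cnj (\<psi> $ i)) = 1"
  proof -
    have "(\<Sum>i<n. \<psi> $ i * cnj (\<psi> $ i)) = complex_of_real (\<Sum>i<n. cmod (\<psi> $ i) ^ 2)"
      by (simp flip: complex_norm_square)
    thus ?thesis using npsi by simp
  qed 
  have S2: "(\<Sum>i<n. \<phi> $ i * cnj (\<phi> $ i)) = 1"
  proof -
    have "(\<Sum>i<n. \<phi> $ i * cnj (\<phi> $ i)) = complex_of_real (\<Sum>i<n. cmod (\<phi> $ i) ^ 2)"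
      by (simp flip: complex_norm_square)
    thus ?thesis using nphi by simp
  qed
  have S4: "(\<Sum>i<n. \<phi> $ i * cnj (\<psi> $ i)) = cnj c" unfolding c_def by (simp add: mult.commute)
  have "(\<Sum>i<n. x $ i * cnj (y $ i)) = ((\<Sum>i<n. \<psi> $ i * cnj (\<psi> $ i)) - cnj \<mu> * (\<Sum>i<n. \<psi> $ i * cnj (\<phi> $ i))
        + \<mu> * (\<Sum>i<n. \<phi> $ i * cnj (\<psi> $ i)) - \<mu> * cnj \<mu> * (\<Sum>i<n. \<phi> $ i * cnj (\<phi> $ i))) / 4"
  proof -
    have "(\<Sum>i<n. x $ i * cnj (y $ i)) = (\<Sum>i<n. (1/4) * (\<psi> $ i * cnj (\<psi> $ i) - cnj \<mu> * (\<psi> $ i * cnj (\<phi> $ i))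
        + \<mu> * (\<phi> $ i * cnj (\<psi> $ i)) - (\<mu> * cnj \<mu>) * (\<phi> $ i * cnj (\<phi> $ i))))"
      by (rule sum.cong[OF refl]) (simp add: x_def y_def field_simps)
    also have "\<dots> = (1/4) * ((\<Sum>i<n. \<psi> $ i * cnj (\<psi> $ i)) - cnj \<mu> * (\<Sum>i<n. \<psi> $ i * cnj (\<phi> $ i))
        + \<mu> * (\<Sum>i<n. \<phi> $ i * cnj (\<psi> $ i)) - (\<mu> * cnj \<mu>) * (\<Sum>i<n. \<phi> $ i * cnj (\<phi> $ i)))"
      by (simp only: sum_distrib_left[symmetric] sum.distrib sum_subtractf)
    finally show ?thesis by simp
  qed
  also have "\<dots> = 0" unfolding S1 S2 S4 c_def[symmetric] using muc mu1 by (simp add: mult.commute)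
  finally have orth: "(\<Sum>i<n. x $ i * cnj (y $ i)) = 0" .
  have n: "0 < n" using n_pos[OF npsi] .
  have P: "psd_mat (Matrix.mat n n (\<lambda>(i,j). x $ i * cnj (x $ j) + y $ i * cnj (y $ j)))"
    by (rule G2') (use orth n in \<open>auto simp: x_def y_def\<close>)
  have "Matrix.mat n n (\<lambda>(i,j). x $ i * cnj (x $ j) + y $ i * cnj (y $ j))
     = mixture (ket_bra \<psi>) (ket_bra \<phi>)"
    unfolding mix_eq[OF psi phi]
    by (rule mat_cong) (simp add: x_def y_def cm mu0 field_simps)
  thus ?thesis using P by simp
qed


lemma powr_mult_self: assumes "(x::real) \<ge> 0" shows "x * x powr (p - 1) = x powr p"
proof -
  have "x powr (1 + (p - 1)) = x powr 1 * x powr (p - 1)" by (rule powr_add)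
  also have "x powr 1 = x" using assms by (rule powr_one)
  finally show ?thesis by simp
qed

lemma M_main:
  assumes psi: "\<psi> \<in> carrier_vec n" and phi: "\<phi> \<in> carrier_vec n"
  and npsi: "(\<Sum>i<n. cmod (\<psi> $ i) ^ 2) = 1" and nphi: "(\<Sum>i<n. cmod (\<phi> $ i) ^ 2) = 1"
  defines "M \<equiv> mixture (ket_bra \<psi>) (ket_bra \<phi>)"
  shows "Re (mtrace (ket_bra \<psi> * mat_powr M (p - 1))) = Re (mtrace (mat_powr M p))"
    and "Re (mtrace (ket_bra \<phi> * mat_powr M (p - 1))) = Re (mtrace (mat_powr M p))"
proof -
  have Pc: "ket_bra \<psi> \<in> carrier_mat n n" and Sc: "ket_bra \<phi> \<in> carrier_mat n n" using psi phi by auto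
  have PSc: "ket_bra \<psi> + ket_bra \<phi> \<in> carrier_mat n n" using Sc by simp
  have Mc: "M \<in> carrier_mat n n" unfolding M_def mixture_def using PSc by simp
  obtain U d where U: "unitary_mat n U" and d: "\<forall>i<n. d i \<ge> 0"
    and A: "M = U * mat_diag n (\<lambda>i. complex_of_real (d i)) * mat_adjoint U"
    using psd_decomp[OF M_psd[OF psi phi npsi nphi, folded M_def] Mc] by blast
  have Uc: "U \<in> carrier_mat n n" using U unitary_carrier by auto
  have Vc: "mat_adjoint U \<in> carrier_mat n n" using Uc by simp
  define a where "a = mat_adjoint U *\<^sub>v \<psi>"
  define b where "b = mat_adjoint U *\<^sub>v \<phi>"
  have ac: "a \<in> carrier_vec n" unfolding a_def by (rule mult_mat_vec_carrier[OF Vc psi])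
  have bc: "b \<in> carrier_vec n" unfolding b_def by (rule mult_mat_vec_carrier[OF Vc phi])
  have na: "(\<Sum>i<n. cmod (a $ i) ^ 2) = 1" unfolding a_def norm_pres[OF U psi] by (rule npsi)
  have nb: "(\<Sum>i<n. cmod (b $ i) ^ 2) = 1" unfolding b_def norm_pres[OF U phi] by (rule nphi)
  have KD: "mat_adjoint U * M * U = mat_diag n (\<lambda>i. complex_of_real (d i))" by (rule DX[OF U A])
  have VPc: "mat_adjoint U * ket_bra \<psi> \<in> carrier_mat n n" by (rule mult_carrier_mat[OF Vc Pc])
  have VSc: "mat_adjoint U * ket_bra \<phi> \<in> carrier_mat n n" by (rule mult_carrier_mat[OF Vc Sc])
  have "mat_adjoint U * M * U = ((1/2) \<cdot>\<^sub>m (mat_adjoint U * ket_bra \<psi> + mat_adjoint U * ket_bra \<phi>)) * U"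
    unfolding M_def mixture_def mult_smult_distrib[OF Vc PSc] mult_add_distrib_mat[OF Vc Pc Sc] ..
  also have "\<dots> = (1/2) \<cdot>\<^sub>m (mat_adjoint U * ket_bra \<psi> * U + mat_adjoint U * ket_bra \<phi> * U)"
    unfolding mult_smult_assoc_mat[OF add_carrier_mat[OF VSc] Uc] add_mult_distrib_mat[OF VPc VSc Uc] ..
  also have "\<dots> = (1/2) \<cdot>\<^sub>m (ket_bra a + ket_bra b)" unfolding a_def b_def K1[OF Uc psi] K1[OF Uc phi] ..
  finally have KM: "mat_adjoint U * M * U = (1/2) \<cdot>\<^sub>m (ket_bra a + ket_bra b)" .
  have h: "(a $ i * cnj (a $ j) + b $ i * cnj (b $ j)) / 2 = (if i = j then complex_of_real (d j) else 0)"
    if "i < n" "j < n" for i j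
  proof -
    have "((1/2) \<cdot>\<^sub>m (ket_bra a + ket_bra b)) $$ (i,j) = mat_diag n (\<lambda>i. complex_of_real (d i)) $$ (i,j)"
      using KD KM by simp
    thus ?thesis using that ac bc by (simp add: ket_bra_idx diag_idx)
  qed
  note SLs = SL[of n "\<lambda>i. a $ i" "\<lambda>i. b $ i" d "\<lambda>x. x powr (p - 1)", OF h na nb]
  have dd: "(\<Sum>i<n. d i * d i powr (p - 1)) = (\<Sum>i<n. d i powr p)"
    by (rule sum.cong[OF refl]) (use d in \<open>simp add: powr_mult_self\<close>)
  have T1: "Re (mtrace (mat_powr M p)) = (\<Sum>i<n. d i powr p)"
  proof -
    have "mtrace (mat_powr M p) = mtrace (mat_diag n (\<lambda>i. complex_of_real (d i powr p)))"
      unfolding powr_eq[OF Mc U d A] by (rule unitary_trace[OF U]) simp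
    also have "\<dots> = complex_of_real (\<Sum>i<n. d i powr p)"
      by (simp add: mtrace_sum[of _ n] diag_idx)
    finally show ?thesis by simp
  qed
  have T2: "Re (mtrace (ket_bra v * mat_powr M (p - 1))) = (\<Sum>i<n. cmod ((mat_adjoint U *\<^sub>v v) $ i) ^ 2 * d i powr (p - 1))"
    if v: "v \<in> carrier_vec n" for v
  proof -
    have vc: "mat_adjoint U *\<^sub>v v \<in> carrier_vec n" by (rule mult_mat_vec_carrier[OF Vc v])
    have "mtrace (ket_bra v * mat_powr M (p - 1))
        = (\<Sum>i<n. (mat_adjoint U * ket_bra v * U) $$ (i,i) * complex_of_real (d i powr (p - 1)))"
      unfolding powr_eq[OF Mc U d A] by (rule TR[OF Uc ket_bra_carrier[OF v]])
    also have "\<dots> = complex_of_real (\<Sum>i<n. cmod ((mat_adjoint U *\<^sub>v v) $ i) ^ 2 * d i powr (p - 1))"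
      unfolding K1[OF Uc v] of_real_sum
      by (rule sum.cong[OF refl]) (use vc in \<open>simp add: ket_bra_idx flip: complex_norm_square\<close>)
    finally show ?thesis by simp
  qed
  show "Re (mtrace (ket_bra \<psi> * mat_powr M (p - 1))) = Re (mtrace (mat_powr M p))"
    unfolding T2[OF psi] T1 a_def[symmetric] using SLs(1) dd by simp
  show "Re (mtrace (ket_bra \<phi> * mat_powr M (p - 1))) = Re (mtrace (mat_powr M p))"
    unfolding T2[OF phi] T1 b_def[symmetric] using SLs(2) dd by simp
qed


theorem proposition1:
  fixes \<psi> \<phi> :: "complex vec" and n :: nat and \<alpha> \<beta> :: real
  assumes "\<psi> \<in> carrier_vec n" and "\<phi> \<in> carrier_vec n"
    and "normalized_vec \<psi>" and "normalized_vec \<phi>"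
    and "0 < \<alpha>" and "\<alpha> < 2" and "\<alpha> \<noteq> 1"
    and "\<beta> \<noteq> 0"
  shows "JS_ab \<alpha> \<beta> (ket_bra \<psi>) (ket_bra \<phi>) = JS'_ab (2 - \<alpha>) \<beta> (ket_bra \<psi>) (ket_bra \<phi>)"
proof -
  have psi: "\<psi> \<in> carrier_vec n" and phi: "\<phi> \<in> carrier_vec n" using assms by auto
  have npsi: "(\<Sum>i<n. cmod (\<psi> $ i) ^ 2) = 1" using assms(3) carrier_vecD[OF psi] unfolding normalized_vec_def by simp
  have nphi: "(\<Sum>i<n. cmod (\<phi> $ i) ^ 2) = 1" using assms(4) carrier_vecD[OF phi] unfolding normalized_vec_def by simp
  define M where "M = mixture (ket_bra \<psi>) (ket_bra \<phi>)"
  define T where "T = Re (mtrace (mat_powr M \<alpha>))"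
  have S0: "ab_entropy \<alpha> \<beta> (ket_bra v) = 0" if v: "v \<in> carrier_vec n" and nv: "(\<Sum>i<n. cmod (v $ i) ^ 2) = 1" for v
    unfolding ab_entropy_def rho_powr[OF v nv] mtrace_ket_bra[OF v] nv by simp
  have e: "1 - (2 - \<alpha>) = \<alpha> - 1" by simp
  have R1: "ab_rel_entropy (2 - \<alpha>) \<beta> (ket_bra \<psi>) M = 1 / ((\<alpha> - 1) * \<beta>) * (1 - T powr \<beta>)"
    unfolding ab_rel_entropy_def e rho_powr[OF psi npsi] T_def M_def M_main(1)[OF psi phi npsi nphi] ..
  have R2: "ab_rel_entropy (2 - \<alpha>) \<beta> (ket_bra \<phi>) M = 1 / ((\<alpha> - 1) * \<beta>) * (1 - T powr \<beta>)"
    unfolding ab_rel_entropy_def e rho_powr[OF phi nphi] T_def M_def M_main(2)[OF psi phi npsi nphi] ..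
  have L: "JS_ab \<alpha> \<beta> (ket_bra \<psi>) (ket_bra \<phi>) = 1 / ((1 - \<alpha>) * \<beta>) * (T powr \<beta> - 1)"
    unfolding JS_ab_def S0[OF psi npsi] S0[OF phi nphi] unfolding ab_entropy_def T_def M_def by simp
  have R: "JS'_ab (2 - \<alpha>) \<beta> (ket_bra \<psi>) (ket_bra \<phi>) = 1 / ((\<alpha> - 1) * \<beta>) * (1 - T powr \<beta>)"
  proof -
    have h: "(x + x) / 2 = x" for x :: real by simp
    show ?thesis unfolding JS'_ab_def M_def[symmetric] R1 R2 by (rule h)
  qed
  have "1 / ((1 - \<alpha>) * \<beta>) * (T powr \<beta> - 1) = 1 / ((\<alpha> - 1) * \<beta>) * (1 - T powr \<beta>)"
  proof -
    have "(\<alpha> - 1) * \<beta> = - ((1 - \<alpha>) * \<beta>)" by (simp add: algebra_simps)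
    thus ?thesis by (simp add: divide_simps)
  qed
  thus ?thesis using L R by simp
qed

end
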